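(* Let $G=(V,E)$ be a prime permutation graph, let $(<_1,<_2)$ be a realizer of $G$, and let $w$ be the first element of $<_1$. Then $\vartriangleleft_1^w=\,<_1$ and $\vartriangleleft_2^w=\,<_2$.
   Context: Graphs are finite, simple, undirected, with nonempty vertex set. A module of $G$ is a nonempty $M\subseteq V$ such that every vertex outside $M$ is adjacent to all or none of $M$; $G$ is prime if its only modules are $V$ and the singletons. A realizer of $G$ is a pair $(<_1,<_2)$ of strict linear orders on $V$ such that distinct $u,v$ are adjacent iff they appear in different orders in $<_1$ and $<_2$; $G$ is a permutation graph if it has a realizer. For a pair of binary relations $(\lhd_1,\lhd_2)$ on $V$: its transitive closure is $(\lhd_1^T,\lhd_2^T)$ (componentwise); its closure under $E$ is $(\lhd_1^E,\lhd_2^E)$ where, for $i\in[2]$, $\lhd_i^E=\lhd_i\cup\{(v,u)\mid u\lhd_{3-i}v,\ \{u,v\}\in E\}\cup\{(u,v)\mid u\lhd_{3-i}v,\ \{u,v\}\notin E\}$. For $w\in V$ define $\lhd_{1,0}^w=\{(w,v)\mid v\in V, v\ne w\}$, $\lhd_{2,0}^w=\emptyset$, and for $k\ge0$, $(\lhd_{1,k+1}^w,\lhd_{2,k+1}^w)=((\lhd_{1,k}^w,\lhd_{2,k}^w)^E)^T$. These increase with $k$; $\lhd_i^w$ denotes $\lhd_{i,m}^w$ for $m$ such that the sequence has stabilized. *)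

theory Defs
  imports Main
begin

definition graph :: "'a set \<Rightarrow> 'a set set \<Rightarrow> bool" where
  "graph V E \<longleftrightarrow> finite V \<and> V \<noteq> {} \<and>
     (\<forall>e\<in>E. \<exists>u v. e = {u, v} \<and> u \<in> V \<and> v \<in> V \<and> u \<noteq> v)"

definition is_module :: "'a set \<Rightarrow> 'a set set \<Rightarrow> 'a set \<Rightarrow> bool" where
  "is_module V E M \<longleftrightarrow> M \<noteq> {} \<and> M \<subseteq> V \<and>
     (\<forall>x \<in> V - M. (\<forall>m\<in>M. {x, m} \<in> E) \<or> (\<forall>m\<in>M. {x, m} \<notin> E))"

definition prime_graph :: "'a set \<Rightarrow> 'a set set \<Rightarrow> bool" where
  "prime_graph V E \<longleftrightarrow> (\<forall>M. is_module V E M \<longrightarrow> M = V \<or> (\<exists>v. M = {v}))"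

definition strict_lin_order :: "'a set \<Rightarrow> 'a rel \<Rightarrow> bool" where
  "strict_lin_order V r \<longleftrightarrow> r \<subseteq> V \<times> V \<and> strict_linear_order_on V r"

definition realizer :: "'a set \<Rightarrow> 'a set set \<Rightarrow> 'a rel \<Rightarrow> 'a rel \<Rightarrow> bool" where
  "realizer V E r1 r2 \<longleftrightarrow> strict_lin_order V r1 \<and> strict_lin_order V r2 \<and>
     (\<forall>u\<in>V. \<forall>v\<in>V. u \<noteq> v \<longrightarrow> ({u, v} \<in> E \<longleftrightarrow> ((u, v) \<in> r1 \<longleftrightarrow> (v, u) \<in> r2)))"

definition permutation_graph :: "'a set \<Rightarrow> 'a set set \<Rightarrow> bool" where
  "permutation_graph V E \<longleftrightarrow> graph V E \<and> (\<exists>r1 r2. realizer V E r1 r2)"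

definition closeE :: "'a set set \<Rightarrow> 'a rel \<times> 'a rel \<Rightarrow> 'a rel \<times> 'a rel" where
  "closeE E p = (let (l1, l2) = p in
     (l1 \<union> {(v, u) | u v. (u, v) \<in> l2 \<and> {u, v} \<in> E} \<union> {(u, v) | u v. (u, v) \<in> l2 \<and> {u, v} \<notin> E},
      l2 \<union> {(v, u) | u v. (u, v) \<in> l1 \<and> {u, v} \<in> E} \<union> {(u, v) | u v. (u, v) \<in> l1 \<and> {u, v} \<notin> E}))"

definition closeT :: "'a rel \<times> 'a rel \<Rightarrow> 'a rel \<times> 'a rel" where
  "closeT p = (trancl (fst p), trancl (snd p))"

definition lhd_seq :: "'a set \<Rightarrow> 'a set set \<Rightarrow> 'a \<Rightarrow> nat \<Rightarrow> 'a rel \<times> 'a rel" where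
  "lhd_seq V E w k = ((closeT \<circ> closeE E) ^^ k) ({(w, v) | v. v \<in> V \<and> v \<noteq> w}, {})"

definition lhd_lim :: "'a set \<Rightarrow> 'a set set \<Rightarrow> 'a \<Rightarrow> 'a rel \<times> 'a rel" where
  "lhd_lim V E w = lhd_seq V E w (LEAST m. \<forall>k\<ge>m. lhd_seq V E w k = lhd_seq V E w m)"

end

theory Submission
  imports Defs
begin

lemma slo_facts:
  assumes "strict_lin_order V r"
  shows "r \<subseteq> V \<times> V" "trans r" "\<And>u. (u,u) \<notin> r"
    "\<And>u v. (u,v) \<in> r \<Longrightarrow> (v,u) \<notin> r"
    "\<And>u v. u \<in> V \<Longrightarrow> v \<in> V \<Longrightarrow> u \<noteq> v \<Longrightarrow> (u,v) \<in> r \<or> (v,u) \<in> r"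
proof -
  show "r \<subseteq> V \<times> V" "trans r" "\<And>u. (u,u) \<notin> r"
    using assms by (auto simp: strict_lin_order_def strict_linear_order_on_def irrefl_on_def)
  then show "\<And>u v. (u,v) \<in> r \<Longrightarrow> (v,u) \<notin> r" by (meson transD)
  show "\<And>u v. u \<in> V \<Longrightarrow> v \<in> V \<Longrightarrow> u \<noteq> v \<Longrightarrow> (u,v) \<in> r \<or> (v,u) \<in> r"
    using assms by (auto simp: strict_lin_order_def strict_linear_order_on_def total_on_def)
qed

lemma realizer_facts:
  assumes R: "realizer V E r1 r2"
  shows "\<And>u v. (u,v) \<in> r2 \<Longrightarrow> {u,v} \<in> E \<Longrightarrow> (v,u) \<in> r1"
    "\<And>u v. (u,v) \<in> r2 \<Longrightarrow> {u,v} \<notin> E \<Longrightarrow> (u,v) \<in> r1"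
    "\<And>u v. (u,v) \<in> r1 \<Longrightarrow> {u,v} \<in> E \<Longrightarrow> (v,u) \<in> r2"
    "\<And>u v. (u,v) \<in> r1 \<Longrightarrow> {u,v} \<notin> E \<Longrightarrow> (u,v) \<in> r2"
proof -
  have s1: "strict_lin_order V r1" and s2: "strict_lin_order V r2"
    and rr: "\<forall>u\<in>V. \<forall>v\<in>V. u \<noteq> v \<longrightarrow> ({u, v} \<in> E \<longleftrightarrow> ((u, v) \<in> r1 \<longleftrightarrow> (v, u) \<in> r2))"
    using R by (auto simp: realizer_def)
  note f1 = slo_facts[OF s1] and f2 = slo_facts[OF s2]
  show "\<And>u v. (u,v) \<in> r2 \<Longrightarrow> {u,v} \<in> E \<Longrightarrow> (v,u) \<in> r1"
  proof -
    fix u v assume a: "(u,v) \<in> r2" "{u,v} \<in> E"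
    then have "u \<in> V" "v \<in> V" "u \<noteq> v" using f2 by auto
    then show "(v,u) \<in> r1" using rr a f2 by (metis insert_commute)
  qed
  show "\<And>u v. (u,v) \<in> r2 \<Longrightarrow> {u,v} \<notin> E \<Longrightarrow> (u,v) \<in> r1"
  proof -
    fix u v assume a: "(u,v) \<in> r2" "{u,v} \<notin> E"
    then have "u \<in> V" "v \<in> V" "u \<noteq> v" using f2 by auto
    then show "(u,v) \<in> r1" using rr a f2 f1 by (metis insert_commute)
  qed
  show "\<And>u v. (u,v) \<in> r1 \<Longrightarrow> {u,v} \<in> E \<Longrightarrow> (v,u) \<in> r2"
  proof -
    fix u v assume a: "(u,v) \<in> r1" "{u,v} \<in> E"
    then have "u \<in> V" "v \<in> V" "u \<noteq> v" using f1 by auto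
    then show "(v,u) \<in> r2" using rr a by metis
  qed
  show "\<And>u v. (u,v) \<in> r1 \<Longrightarrow> {u,v} \<notin> E \<Longrightarrow> (u,v) \<in> r2"
  proof -
    fix u v assume a: "(u,v) \<in> r1" "{u,v} \<notin> E"
    then have "u \<in> V" "v \<in> V" "u \<noteq> v" using f1 by auto
    then show "(u,v) \<in> r2" using rr a f2 by metis
  qed
qed

lemma distinguish:
  assumes t1: "trans L1" and t2: "trans L2"
  and c12: "\<And>u v. (u,v)\<in>L1 \<Longrightarrow> {u,v}\<in>E \<Longrightarrow> (v,u)\<in>L2"
  and c12': "\<And>u v. (u,v)\<in>L1 \<Longrightarrow> {u,v}\<notin>E \<Longrightarrow> (u,v)\<in>L2"
  and c21: "\<And>u v. (u,v)\<in>L2 \<Longrightarrow> {u,v}\<in>E \<Longrightarrow> (v,u)\<in>L1"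
  and c21': "\<And>u v. (u,v)\<in>L2 \<Longrightarrow> {u,v}\<notin>E \<Longrightarrow> (u,v)\<in>L1"
  and n1: "(a,b)\<notin>L1" "(b,a)\<notin>L1"
  and xa: "(x,a)\<in>L1 \<or> (a,x)\<in>L1" and xb: "(x,b)\<in>L1 \<or> (b,x)\<in>L1"
  shows "{x,a}\<in>E \<longleftrightarrow> {x,b}\<in>E"
proof -
  have n2: "(a,b)\<notin>L2" "(b,a)\<notin>L2" using n1 c21 c21' by blast+
  have sa: "{a,x} = {x,a}" "{b,x} = {x,b}" by auto
  show ?thesis
  proof (cases "(x,a)\<in>L1")
    case xa1: True
    show ?thesis
    proof (cases "(x,b)\<in>L1")
      case True
      show ?thesis
      proof (cases "{x,a}\<in>E"; cases "{x,b}\<in>E")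
        assume "{x,a}\<in>E" "{x,b}\<notin>E"
        then have "(a,x)\<in>L2" "(x,b)\<in>L2" using c12 c12' xa1 True by auto
        then show ?thesis using n2 t2 by (meson transD)
      next
        assume "{x,a}\<notin>E" "{x,b}\<in>E"
        then have "(x,a)\<in>L2" "(b,x)\<in>L2" using c12 c12' xa1 True by auto
        then show ?thesis using n2 t2 by (meson transD)
      qed auto
    next
      case False
      then have "(b,x)\<in>L1" using xb by auto
      then show ?thesis using xa1 n1 t1 by (meson transD)
    qed
  next
    case False
    then have xa1: "(a,x)\<in>L1" using xa by auto
    show ?thesis
    proof (cases "(b,x)\<in>L1")
      case True
      show ?thesis
      proof (cases "{x,a}\<in>E"; cases "{x,b}\<in>E")
        assume "{x,a}\<in>E" "{x,b}\<notin>E"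
        then have "(x,a)\<in>L2" "(b,x)\<in>L2" using c12 c12' xa1 True sa by auto
        then show ?thesis using n2 t2 by (meson transD)
      next
        assume "{x,a}\<notin>E" "{x,b}\<in>E"
        then have "(a,x)\<in>L2" "(x,b)\<in>L2" using c12 c12' xa1 True sa by auto
        then show ?thesis using n2 t2 by (meson transD)
      qed auto
    next
      case False
      then have "(x,b)\<in>L1" using xb by auto
      then show ?thesis using xa1 n1 t1 by (meson transD)
    qed
  qed
qed

lemma all_comparable:
  assumes prime: "prime_graph V E"
  and t1: "trans L1" and t2: "trans L2"
  and c12: "\<And>u v. (u,v)\<in>L1 \<Longrightarrow> {u,v}\<in>E \<Longrightarrow> (v,u)\<in>L2"
  and c12': "\<And>u v. (u,v)\<in>L1 \<Longrightarrow> {u,v}\<notin>E \<Longrightarrow> (u,v)\<in>L2"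
  and c21: "\<And>u v. (u,v)\<in>L2 \<Longrightarrow> {u,v}\<in>E \<Longrightarrow> (v,u)\<in>L1"
  and c21': "\<And>u v. (u,v)\<in>L2 \<Longrightarrow> {u,v}\<notin>E \<Longrightarrow> (u,v)\<in>L1"
  and W: "w\<in>V" "\<forall>v\<in>V. v\<noteq>w \<longrightarrow> (w,v)\<in>L1"
  and ab: "a\<in>V" "b\<in>V" "a\<noteq>b"
  shows "(a,b)\<in>L1 \<or> (b,a)\<in>L1"
proof (rule ccontr)
  assume "\<not> ?thesis"
  then have nc: "(a,b)\<notin>L1" "(b,a)\<notin>L1" by auto
  define I where "I = {(p,q). p\<in>V \<and> q\<in>V \<and> p\<noteq>q \<and> (p,q)\<notin>L1 \<and> (q,p)\<notin>L1}"
  define M where "M = I\<^sup>* `` {a}"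
  have MV: "M \<subseteq> V"
  proof
    fix m assume "m \<in> M"
    then have "(a,m) \<in> I\<^sup>*" by (simp add: M_def)
    then show "m \<in> V" by (induction rule: rtrancl_induct) (use ab in \<open>auto simp: I_def\<close>)
  qed
  have aM: "a \<in> M" by (simp add: M_def)
  have bM: "b \<in> M" using ab nc by (auto simp: M_def I_def)
  have wM: "w \<notin> M"
  proof
    assume "w \<in> M"
    then have "(a,w) \<in> I\<^sup>*" by (simp add: M_def)
    then show False
    proof (cases rule: rtranclE)
      case base
      then show False using nc W ab by auto
    next
      case (step y)
      then show False using W by (auto simp: I_def)
    qed
  qed
  have key: "\<And>x m. x \<in> V - M \<Longrightarrow> m \<in> M \<Longrightarrow> ({x,m}\<in>E \<longleftrightarrow> {x,a}\<in>E)"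
  proof -
    fix x m assume x: "x \<in> V - M" and "m \<in> M"
    then have "(a,m) \<in> I\<^sup>*" by (simp add: M_def)
    then show "{x,m}\<in>E \<longleftrightarrow> {x,a}\<in>E"
    proof (induction rule: rtrancl_induct)
      case base then show ?case by simp
    next
      case (step m n)
      have mM: "m \<in> M" using step(1) by (simp add: M_def)
      have nM: "n \<in> M" using step(1,2) by (simp add: M_def)
      have cm: "(x,m)\<in>L1 \<or> (m,x)\<in>L1"
      proof (rule ccontr)
        assume "\<not> ?thesis"
        then have "(m,x) \<in> I" using x mM MV by (auto simp: I_def)
        then have "x \<in> M" using step(1) by (auto simp: M_def)
        then show False using x by auto
      qed
      have cn: "(x,n)\<in>L1 \<or> (n,x)\<in>L1"
      proof (rule ccontr)
        assume "\<not> ?thesis"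
        then have "(n,x) \<in> I" using x nM MV by (auto simp: I_def)
        then have "x \<in> M" using step(1,2) by (auto simp: M_def)
        then show False using x by auto
      qed
      have "(m,n)\<notin>L1" "(n,m)\<notin>L1" using step(2) by (auto simp: I_def)
      then have "{x,m}\<in>E \<longleftrightarrow> {x,n}\<in>E"
        using distinguish[OF t1 t2 c12 c12' c21 c21' _ _ cm cn] by blast
      then show ?case using step(3) by simp
    qed
  qed
  have "is_module V E M"
    unfolding is_module_def
  proof (intro conjI ballI)
    show "M \<noteq> {}" using aM by auto
    show "M \<subseteq> V" by (rule MV)
    fix x assume x: "x \<in> V - M"
    show "(\<forall>m\<in>M. {x, m} \<in> E) \<or> (\<forall>m\<in>M. {x, m} \<notin> E)"
      using key[OF x] by blast
  qed
  then have "M = V \<or> (\<exists>v. M = {v})" using prime by (simp add: prime_graph_def)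
  then show False using wM W aM bM ab by auto
qed

theorem corollary5p7:
  fixes V :: "'a set" and E :: "'a set set" and r1 r2 :: "'a rel" and w :: 'a
  assumes "permutation_graph V E"
    and "prime_graph V E"
    and "realizer V E r1 r2"
    and "w \<in> V" and "\<forall>v\<in>V. v \<noteq> w \<longrightarrow> (w, v) \<in> r1"
  shows "fst (lhd_lim V E w) = r1 \<and> snd (lhd_lim V E w) = r2"
proof -
  have finV: "finite V" using assms(1) by (simp add: permutation_graph_def graph_def)
  have s1: "strict_lin_order V r1" and s2: "strict_lin_order V r2"
    using assms(3) by (auto simp: realizer_def)
  note f1 = slo_facts[OF s1] and f2 = slo_facts[OF s2]
  note rf = realizer_facts[OF assms(3)]
  define F :: "'a rel \<times> 'a rel \<Rightarrow> 'a rel \<times> 'a rel" where "F = closeT \<circ> closeE E"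
  define s where "s k = lhd_seq V E w k" for k
  have s_Suc: "s (Suc k) = F (s k)" for k by (simp add: s_def lhd_seq_def F_def)
  have s0: "s 0 = ({(w,v)|v. v\<in>V \<and> v\<noteq>w}, {})" by (simp add: s_def lhd_seq_def)
  have closeE_fst: "fst (closeE E p) = fst p \<union> {(v, u) | u v. (u, v) \<in> snd p \<and> {u, v} \<in> E} \<union> {(u, v) | u v. (u, v) \<in> snd p \<and> {u, v} \<notin> E}" for p
    by (cases p) (simp add: closeE_def)
  have closeE_snd: "snd (closeE E p) = snd p \<union> {(v, u) | u v. (u, v) \<in> fst p \<and> {u, v} \<in> E} \<union> {(u, v) | u v. (u, v) \<in> fst p \<and> {u, v} \<notin> E}" for p
    by (cases p) (simp add: closeE_def)
  have F_fst: "fst (F p) = (fst (closeE E p))\<^sup>+" and F_snd: "snd (F p) = (snd (closeE E p))\<^sup>+" for p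
    by (simp_all add: F_def closeT_def)
  have infl: "fst p \<subseteq> fst (F p) \<and> snd p \<subseteq> snd (F p)" for p
    unfolding F_fst F_snd closeE_fst closeE_snd by (blast intro: r_into_trancl')
  have mono_s: "fst (s i) \<subseteq> fst (s j) \<and> snd (s i) \<subseteq> snd (s j)" if "i \<le> j" for i j
    using that
  proof (induction j rule: dec_induct)
    case base then show ?case by simp
  next
    case (step j) then show ?case unfolding s_Suc[of j] using infl[of "s j"] by (meson subset_trans)
  qed
  have bound: "fst (s k) \<subseteq> r1 \<and> snd (s k) \<subseteq> r2" for k
  proof (induction k)
    case 0 then show ?case using s0 assms(5) by auto
  next
    case (Suc k)
    have a: "fst (closeE E (s k)) \<subseteq> r1" unfolding closeE_fst using Suc rf(1,2) by blast
    have b: "snd (closeE E (s k)) \<subseteq> r2" unfolding closeE_snd using Suc rf(3,4) by blast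
    have "fst (F (s k)) \<subseteq> r1" unfolding F_fst using trancl_mono[OF _ a] trancl_id[OF f1(2)] by auto
    moreover have "snd (F (s k)) \<subseteq> r2" unfolding F_snd using trancl_mono[OF _ b] trancl_id[OF f2(2)] by auto
    ultimately show ?case by (simp add: s_Suc)
  qed
  have finr1: "finite r1" using f1(1) finV by (meson finite_SigmaI finite_subset)
  have finr2: "finite r2" using f2(1) finV by (meson finite_SigmaI finite_subset)
  have stab: "\<exists>m. s (Suc m) = s m"
  proof (rule ccontr)
    assume ne: "\<not> ?thesis"
    have grow: "card (fst (s k)) + card (snd (s k)) \<ge> k" for k
    proof (induction k)
      case 0 then show ?case by simp
    next
      case (Suc k)
      have m: "fst (s k) \<subseteq> fst (s (Suc k))" "snd (s k) \<subseteq> snd (s (Suc k))" using mono_s[of k "Suc k"] by auto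
      have fa: "finite (fst (s (Suc k)))" "finite (snd (s (Suc k)))"
        using bound[of "Suc k"] finr1 finr2 finite_subset by blast+
      have neq: "s (Suc k) \<noteq> s k" using ne by blast
      have c1: "card (fst (s k)) \<le> card (fst (s (Suc k)))" "card (snd (s k)) \<le> card (snd (s (Suc k)))"
        using m fa card_mono by blast+
      have "fst (s k) \<subset> fst (s (Suc k)) \<or> snd (s k) \<subset> snd (s (Suc k))"
        using m neq by (metis prod.collapse psubsetI)
      then have "card (fst (s k)) < card (fst (s (Suc k))) \<or> card (snd (s k)) < card (snd (s (Suc k)))"
        using fa psubset_card_mono by blast
      then show ?case using Suc c1 by linarith
    qed
    have "card (fst (s k)) + card (snd (s k)) \<le> card r1 + card r2" for k
      using bound[of k] card_mono finr1 finr2 by (meson add_le_mono)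
    then show False using grow[of "Suc (card r1 + card r2)"] by (meson not_less_eq_eq)
  qed
  then obtain m where m: "s (Suc m) = s m" by blast
  have const: "s k = s m" if "m \<le> k" for k
    using that
  proof (induction k rule: dec_induct)
    case base then show ?case by simp
  next
    case (step k) then show ?case using m s_Suc by metis
  qed
  define m0 where "m0 = (LEAST m. \<forall>k\<ge>m. lhd_seq V E w k = lhd_seq V E w m)"
  have "\<forall>k\<ge>m. lhd_seq V E w k = lhd_seq V E w m" using const unfolding s_def by blast
  then have "\<forall>k\<ge>m0. lhd_seq V E w k = lhd_seq V E w m0" unfolding m0_def by (rule LeastI)
  then have st: "\<forall>k\<ge>m0. s k = s m0" unfolding s_def .
  have eqS: "s (Suc m0) = s m0" by (rule st[rule_format]) simp
  have "F (s m0) = s (Suc m0)" by (rule s_Suc[symmetric])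
  also have "\<dots> = s m0" by (rule eqS)
  finally have fix0: "F (s m0) = s m0" .
  have lim: "lhd_lim V E w = s m0" unfolding lhd_lim_def s_def m0_def ..
  define L1 where "L1 = fst (s m0)"
  define L2 where "L2 = snd (s m0)"
  have L1eq: "L1 = (fst (closeE E (s m0)))\<^sup>+"
  proof -
    have "L1 = fst (F (s m0))" unfolding L1_def by (simp only: fix0)
    also have "\<dots> = (fst (closeE E (s m0)))\<^sup>+" by (rule F_fst)
    finally show ?thesis .
  qed
  have L2eq: "L2 = (snd (closeE E (s m0)))\<^sup>+"
  proof -
    have "L2 = snd (F (s m0))" unfolding L2_def by (simp only: fix0)
    also have "\<dots> = (snd (closeE E (s m0)))\<^sup>+" by (rule F_snd)
    finally show ?thesis .
  qed
  have t1: "trans L1" unfolding L1eq by (rule trans_trancl)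
  have t2: "trans L2" unfolding L2eq by (rule trans_trancl)
  have c12: "(v,u)\<in>L2" if a: "(u,v)\<in>L1" "{u,v}\<in>E" for u v
  proof -
    have "(v,u) \<in> snd (closeE E (s m0))" unfolding closeE_snd using a unfolding L1_def by blast
    then show ?thesis unfolding L2eq by (rule r_into_trancl')
  qed
  have c12': "(u,v)\<in>L2" if a: "(u,v)\<in>L1" "{u,v}\<notin>E" for u v
  proof -
    have "(u,v) \<in> snd (closeE E (s m0))" unfolding closeE_snd using a unfolding L1_def by blast
    then show ?thesis unfolding L2eq by (rule r_into_trancl')
  qed
  have c21: "(v,u)\<in>L1" if a: "(u,v)\<in>L2" "{u,v}\<in>E" for u v
  proof -
    have "(v,u) \<in> fst (closeE E (s m0))" unfolding closeE_fst using a unfolding L2_def by blast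
    then show ?thesis unfolding L1eq by (rule r_into_trancl')
  qed
  have c21': "(u,v)\<in>L1" if a: "(u,v)\<in>L2" "{u,v}\<notin>E" for u v
  proof -
    have "(u,v) \<in> fst (closeE E (s m0))" unfolding closeE_fst using a unfolding L2_def by blast
    then show ?thesis unfolding L1eq by (rule r_into_trancl')
  qed
  have W: "\<forall>v\<in>V. v\<noteq>w \<longrightarrow> (w,v)\<in>L1"
  proof (intro ballI impI)
    fix v assume "v \<in> V" "v \<noteq> w"
    then have "(w,v) \<in> fst (s 0)" unfolding s0 by simp
    then show "(w,v) \<in> L1" unfolding L1_def using mono_s[of 0 m0] by blast
  qed
  have sub1: "L1 \<subseteq> r1" unfolding L1_def using bound[of m0] by blast
  have sub2: "L2 \<subseteq> r2" unfolding L2_def using bound[of m0] by blast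
  note comp = all_comparable[OF assms(2) t1 t2 c12 c12' c21 c21' assms(4) W]
  have "L1 = r1"
  proof
    show "r1 \<subseteq> L1"
    proof
      fix p assume p: "p \<in> r1"
      obtain u v where uv: "p = (u,v)" by fastforce
      have "u \<in> V" "v \<in> V" "u \<noteq> v" using p uv f1 by auto
      then have "(u,v)\<in>L1 \<or> (v,u)\<in>L1" using comp by blast
      then show "p \<in> L1" using p uv sub1 f1(4) by blast
    qed
  qed (rule sub1)
  moreover have "L2 = r2"
  proof
    show "r2 \<subseteq> L2"
    proof
      fix p assume p: "p \<in> r2"
      obtain u v where uv: "p = (u,v)" by fastforce
      have "u \<in> V" "v \<in> V" "u \<noteq> v" using p uv f2 by auto
      then have "(u,v)\<in>L1 \<or> (v,u)\<in>L1" using comp by blast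
      then have "(u,v)\<in>L2 \<or> (v,u)\<in>L2" using c12 c12' by (metis insert_commute)
      then show "p \<in> L2" using p uv sub2 f2(4) by blast
    qed
  qed (rule sub2)
  ultimately show ?thesis using lim L1_def L2_def by simp
qed

end
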